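(* Let $n\ge 3$ and $f=x^n+a_{n-1}x^{n-1}+\cdots+a_0\in\mathbb{C}[x]$ with roots $r_1,\ldots,r_n$ (with multiplicity). Define the polynomials \[f_1(x,y)=\frac{f(y)-f(x)}{y-x},\qquad f_2(x,y)=\frac{f\left(\frac{x+y}{2}\right)-f(x)}{\frac{y-x}{2}}.\] Let $D_1=\prod_{1\le i<j\le n}(r_i-r_j)^2$ and $D_2=\prod_{1\le i,j,k\le n,\ i<j,\ j\ne k,\ k\ne i}(2r_k-r_i-r_j)$. Then $\operatorname{res}(f,\operatorname{res}(f_1,f_2,y),x)=0$ if and only if $D_1D_2=0$.
   Context: The quotients defining $f_1,f_2$ are polynomials in $x,y$. $\operatorname{res}(\cdot,\cdot,y)$ denotes the Sylvester resultant with respect to $y$ (and similarly for $x$). *)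

theory Defs
  imports Complex_Main "HOL-Computational_Algebra.Polynomial" "Subresultants.Resultant_Prelim"
begin

text \<open>Bivariate polynomials in x,y are represented as complex poly poly:
  the outer variable is y, the coefficients are polynomials in x.\<close>

definition poly_in_y :: "complex poly \<Rightarrow> complex poly poly" where
  "poly_in_y f = map_poly (\<lambda>c. [:c:]) f"

definition poly_in_x :: "complex poly \<Rightarrow> complex poly poly" where
  "poly_in_x f = [:f:]"

definition f1 :: "complex poly \<Rightarrow> complex poly poly" where
  "f1 f = (poly_in_y f - poly_in_x f) div [: -[:0,1:], 1 :]"

definition f2 :: "complex poly \<Rightarrow> complex poly poly" where
  "f2 f = (pcompose (poly_in_y f) [: [:0, 1/2:], [:1/2:] :] - poly_in_x f)
            div [: -[:0, 1/2:], [:1/2:] :]"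

definition D1 :: "nat \<Rightarrow> (nat \<Rightarrow> complex) \<Rightarrow> complex" where
  "D1 n r = (\<Prod>(i,j) \<in> {(i,j). i < j \<and> j < n}. (r i - r j)^2)"

definition D2 :: "nat \<Rightarrow> (nat \<Rightarrow> complex) \<Rightarrow> complex" where
  "D2 n r = (\<Prod>(i,j,k) \<in> {(i,j,k). i < j \<and> j < n \<and> k < n \<and> j \<noteq> k \<and> k \<noteq> i}.
               2 * r k - r i - r j)"

end

theory Submission
  imports Defs Subresultants.Subresultant_Gcd "HOL-Computational_Algebra.Field_as_Ring"
   "HOL-Computational_Algebra.Fundamental_Theorem_Algebra"
begin


lemma res0_iff:
  fixes p q :: "complex poly"
  assumes "p \<noteq> 0"
  shows "resultant p q = 0 \<longleftrightarrow> (\<exists>x. poly p x = 0 \<and> poly q x = 0)"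
proof
  assume "resultant p q = 0"
  then have d: "degree (gcd p q) \<noteq> 0" by (simp add: resultant_0_gcd)
  then obtain x where x: "poly (gcd p q) x = 0"
    using fundamental_theorem_of_algebra[of "gcd p q"] constant_degree[of "gcd p q"] d by blast
  have "poly p x = 0" using x poly_eq_0_iff_dvd dvd_trans gcd_dvd1 by metis
  moreover have "poly q x = 0" using x poly_eq_0_iff_dvd dvd_trans gcd_dvd2 by metis
  ultimately show "\<exists>x. poly p x = 0 \<and> poly q x = 0" by blast
next
  assume "\<exists>x. poly p x = 0 \<and> poly q x = 0"
  then obtain x where "poly p x = 0" "poly q x = 0" by blast
  then have dv: "[:-x,1:] dvd gcd p q" by (simp add: poly_eq_0_iff_dvd)
  have "gcd p q \<noteq> 0" using assms by simp
  then have "degree [:-x,1:] \<le> degree (gcd p q)" using dv dvd_imp_degree_le by blast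
  then show "resultant p q = 0" by (simp add: resultant_0_gcd)
qed

lemma pcompose_idR': "pcompose p (pCons 0 1) = p"
  using pcompose_idR[of p] by (simp only: one_pCons)

lemma poly_in_y_eval: "poly (poly_in_y f) q = pcompose f q"
  unfolding poly_in_y_def by (simp add: pcompose_altdef)

lemma Q1_eq: "f1 f * [: -[:0,1:], 1:] = poly_in_y f - poly_in_x f"
proof -
  have "poly (poly_in_y f - poly_in_x f) [:0,1:] = 0"
    by (simp add: poly_in_y_eval poly_in_x_def pcompose_idR')
  then have "[: -[:0,1:], 1:] dvd poly_in_y f - poly_in_x f"
    using poly_eq_0_iff_dvd by blast
  then show ?thesis unfolding f1_def by (rule dvd_div_mult_self)
qed

lemma Q2_eq: "f2 f * [: -[:0,1/2:], [:1/2:] :] =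
   pcompose (poly_in_y f) [: [:0, 1/2:], [:1/2:] :] - poly_in_x f"
proof -
  let ?N = "pcompose (poly_in_y f) [: [:0, 1/2:], [:1/2:] :] - poly_in_x f"
  have e: "poly [: [:0, 1/2:], [:1/2:] :] [:0,1::complex:] = [:0,1:]"
    by simp
  have "poly ?N [:0,1:] = 0"
    by (simp only: poly_diff poly_pcompose e) (simp add: poly_in_y_eval poly_in_x_def pcompose_idR')
  then have "[: -[:0,1:], 1:] dvd ?N"
    using poly_eq_0_iff_dvd by blast
  then obtain k where k: "?N = [: -[:0,1:], 1:] * k" by (auto simp: dvd_def)
  have h: "[: -[:0,1/2:], [:1/2:] :] = smult [:1/2:] [: -[:0,1:], 1::complex poly:]"
    by simp
  have h2: "[:1/2:] * [:2:] = (1::complex poly)" by simp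
  have "[: -[:0,1/2:], [:1/2:] :] * smult [:2:] k = smult ([:1/2:] * [:2:]) ([: -[:0,1:], 1:] * k)"
    unfolding h by (simp only: mult_smult_left mult_smult_right smult_smult mult.commute)
  also have "\<dots> = [: -[:0,1:], 1:] * k" unfolding h2 by simp
  finally have "[: -[:0,1/2:], [:1/2:] :] * smult [:2:] k = [: -[:0,1:], 1:] * k" .
  then have "[: -[:0,1/2:], [:1/2:] :] dvd ?N" using k by (metis dvd_triv_left)
  then show ?thesis unfolding f2_def by (rule dvd_div_mult_self)
qed

lemma eval_in_y: "map_poly (\<lambda>p. poly p a) (poly_in_y f) = f"
  unfolding poly_in_y_def by (simp add: map_poly_map_poly o_def)

lemma degree_in_y: "degree (poly_in_y f) = degree f"
  unfolding poly_in_y_def by (rule degree_map_poly) simp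

lemma E1: "map_poly (\<lambda>p. poly p a) (f1 f) * [:-a,1:] = f - [:poly f a:]"
proof -
  interpret m: map_poly_comm_ring_hom "\<lambda>p::complex poly. poly p a" ..
  have "map_poly (\<lambda>p. poly p a) (f1 f * [: -[:0,1:], 1:]) =
     map_poly (\<lambda>p. poly p a) (poly_in_y f - poly_in_x f)" by (simp only: Q1_eq)
  then have "map_poly (\<lambda>p. poly p a) (f1 f) * map_poly (\<lambda>p. poly p a) [: -[:0,1:], 1:] =
     map_poly (\<lambda>p. poly p a) (poly_in_y f) - map_poly (\<lambda>p. poly p a) (poly_in_x f)"
    by (simp only: m.hom_mult m.hom_minus)
  moreover have "map_poly (\<lambda>p. poly p a) [: -[:0,1:], 1:] = [:-a,1:]" by simp
  moreover have "map_poly (\<lambda>p. poly p a) (poly_in_x f) = [:poly f a:]" unfolding poly_in_x_def by (subst poly_hom.map_poly_pCons_hom) simp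
  ultimately show ?thesis by (simp only: eval_in_y)
qed

lemma E2: "map_poly (\<lambda>p. poly p a) (f2 f) * [:-a/2,1/2:] = pcompose f [:a/2,1/2:] - [:poly f a:]"
proof -
  interpret m: map_poly_comm_ring_hom "\<lambda>p::complex poly. poly p a" ..
  have "map_poly (\<lambda>p. poly p a) (f2 f * [: -[:0,1/2:], [:1/2:] :]) =
     map_poly (\<lambda>p. poly p a) (pcompose (poly_in_y f) [: [:0, 1/2:], [:1/2:] :] - poly_in_x f)"
    by (simp only: Q2_eq)
  then have "map_poly (\<lambda>p. poly p a) (f2 f) * map_poly (\<lambda>p. poly p a) [: -[:0,1/2:], [:1/2:] :] =
     pcompose (map_poly (\<lambda>p. poly p a) (poly_in_y f)) (map_poly (\<lambda>p. poly p a) [: [:0, 1/2:], [:1/2:] :])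
      - map_poly (\<lambda>p. poly p a) (poly_in_x f)"
    by (simp only: m.hom_mult m.hom_minus poly_hom.map_poly_pcompose)
  moreover have "map_poly (\<lambda>p. poly p a) [: -[:0,1/2:], [:1/2:] :] = [:-a/2,1/2:]" by simp
  moreover have "map_poly (\<lambda>p. poly p a) [: [:0,1/2:], [:1/2:] :] = [:a/2,1/2:]" by simp
  moreover have "map_poly (\<lambda>p. poly p a) (poly_in_x f) = [:poly f a:]" unfolding poly_in_x_def by (subst poly_hom.map_poly_pCons_hom) simp
  ultimately show ?thesis by (simp only: eval_in_y)
qed



lemma deg_quot:
  fixes q N :: "'a::idom poly"
  assumes a1: "q * [:c,d:] = N" and a2: "d \<noteq> 0" and a3: "degree N = m" and a4: "m > 0"
  shows "degree q = m - 1"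
proof -
  have N0: "N \<noteq> 0" using a3 a4 by auto
  have q0: "q \<noteq> 0"
  proof
    assume "q = 0" then have "N = 0" using a1 by simp
    then show False using N0 by simp
  qed
  have cd0: "[:c,d:] \<noteq> 0" using a2 by simp
  have dg: "degree [:c,d:] = 1" using a2 by simp
  have "degree N = degree q + 1" using degree_mult_eq[OF q0 cd0] dg a1 by simp
  then show ?thesis using a3 by simp
qed

lemma deg_diff_const:
  fixes p :: "'a::idom poly"
  assumes "degree p > 0"
  shows "degree (p - [:c:]) = degree p"
proof -
  have "p - [:c:] = p + (- [:c:])" by simp
  also have "degree \<dots> = degree p" by (rule degree_add_eq_left) (use assms in simp)
  finally show ?thesis .
qed

lemma deg_f1: assumes "degree f > 0" shows "degree (f1 f) = degree f - 1"
proof (rule deg_quot[OF Q1_eq])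
  show "degree (poly_in_y f - poly_in_x f) = degree f"
    unfolding poly_in_x_def using deg_diff_const[of "poly_in_y f" f] assms degree_in_y by simp
qed (use assms in simp_all)

lemma deg_f2: assumes "degree f > 0" shows "degree (f2 f) = degree f - 1"
proof (rule deg_quot[OF Q2_eq])
  have "degree (pcompose (poly_in_y f) [: [:0, 1/2:], [:1/2:] :]) = degree f"
    by (simp only: degree_pcompose degree_in_y) simp
  then show "degree (pcompose (poly_in_y f) [: [:0, 1/2:], [:1/2:] :] - poly_in_x f) = degree f"
    unfolding poly_in_x_def using deg_diff_const[of "pcompose (poly_in_y f) [: [:0, 1/2:], [:1/2:] :]" f] assms by simp
qed (use assms in simp_all)

lemma deg_E1: assumes "degree f > 0" shows "degree (map_poly (\<lambda>p. poly p a) (f1 f)) = degree f - 1"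
  by (rule deg_quot[OF E1]) (use assms deg_diff_const in simp_all)

lemma deg_E2: assumes "degree f > 0" shows "degree (map_poly (\<lambda>p. poly p a) (f2 f)) = degree f - 1"
proof (rule deg_quot[OF E2])
  have "degree (pcompose f [:a/2,1/2:]) = degree f"
    by (simp only: degree_pcompose) simp
  then show "degree (pcompose f [:a/2,1/2:] - [:poly f a:]) = degree f"
    using deg_diff_const[of "pcompose f [:a/2,1/2:]" "poly f a"] assms by simp
qed (use assms in simp_all)

lemma res_eval: assumes "degree f > 0"
  shows "poly (resultant (f1 f) (f2 f)) a =
    resultant (map_poly (\<lambda>p. poly p a) (f1 f)) (map_poly (\<lambda>p. poly p a) (f2 f))"
  by (rule poly_hom.resultant_map_poly[symmetric])
     (use assms in \<open>simp_all only: deg_f1 deg_f2 deg_E1 deg_E2\<close>)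



lemma key:
  fixes r :: "nat \<Rightarrow> complex"
  assumes fd: "f = (\<Prod>i<n. [:- r i, 1:])" and k: "k < n"
  shows "resultant (map_poly (\<lambda>p. poly p (r k)) (f1 f)) (map_poly (\<lambda>p. poly p (r k)) (f2 f)) = 0
    \<longleftrightarrow> (\<exists>i<n. \<exists>j<n. i \<noteq> k \<and> j \<noteq> k \<and> r k + r i = 2 * r j)"
proof -
  define a where "a = r k"
  define A where "A = {..<n} - {k}"
  have fA: "finite A" unfolding A_def by simp
  let ?G1 = "map_poly (\<lambda>p. poly p a) (f1 f)"
  let ?G2 = "map_poly (\<lambda>p. poly p a) (f2 f)"
  have fa: "poly f a = 0" unfolding fd a_def poly_prod using k
    by (subst prod_zero_iff) auto
  have fsplit: "f = [:-a,1:] * (\<Prod>i\<in>A. [:- r i, 1:])"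
    unfolding fd A_def a_def using k by (simp add: prod.remove)
  have "?G1 * [:-a,1:] = f" using E1[of a f] fa by simp
  then have "[:-a,1:] * ?G1 = [:-a,1:] * (\<Prod>i\<in>A. [:- r i, 1:])" using fsplit by (simp add: mult.commute)
  moreover have nz1: "[:-a,1:] \<noteq> 0" by simp
  ultimately have G1: "?G1 = (\<Prod>i\<in>A. [:- r i, 1:])" using mult_left_cancel[OF nz1] by blast
  have pc: "pcompose [:- r i, 1:] [:a/2,1/2:] = [:a/2 - r i, 1/2:]" for i
    by (simp add: pcompose_pCons)
  have "pcompose f [:a/2,1/2:] = (\<Prod>i<n. [:a/2 - r i, 1/2:])"
    unfolding fd pcompose_prod pc ..
  also have "\<dots> = [:a/2 - a, 1/2:] * (\<Prod>i\<in>A. [:a/2 - r i, 1/2:])"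
    unfolding A_def a_def using k by (simp add: prod.remove)
  also have "[:a/2 - a, 1/2:] = [:-a/2, 1/2:]" by simp
  finally have fc: "pcompose f [:a/2,1/2:] = [:-a/2, 1/2:] * (\<Prod>i\<in>A. [:a/2 - r i, 1/2:])" .
  have "?G2 * [:-a/2,1/2:] = pcompose f [:a/2,1/2:]" using E2[of a f] fa by simp
  then have "[:-a/2,1/2:] * ?G2 = [:-a/2,1/2:] * (\<Prod>i\<in>A. [:a/2 - r i, 1/2:])" using fc by (simp add: mult.commute)
  moreover have nz2: "[:-a/2,1/2:] \<noteq> 0" by simp
  ultimately have G2: "?G2 = (\<Prod>i\<in>A. [:a/2 - r i, 1/2:])" using mult_left_cancel[OF nz2] by blast
  have G10: "?G1 \<noteq> 0" unfolding G1 using fA by (simp add: prod_zero_iff)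
  have "resultant ?G1 ?G2 = 0 \<longleftrightarrow> (\<exists>y. poly ?G1 y = 0 \<and> poly ?G2 y = 0)"
    by (rule res0_iff[OF G10])
  also have "\<dots> \<longleftrightarrow> (\<exists>y. (\<exists>i\<in>A. y = r i) \<and> (\<exists>j\<in>A. a/2 - r j + y/2 = 0))"
    unfolding G1 G2 poly_prod using fA by (simp add: prod_zero_iff)
  also have "\<dots> \<longleftrightarrow> (\<exists>i<n. \<exists>j<n. i \<noteq> k \<and> j \<noteq> k \<and> r k + r i = 2 * r j)"
  proof
    assume "\<exists>y. (\<exists>i\<in>A. y = r i) \<and> (\<exists>j\<in>A. a/2 - r j + y/2 = 0)"
    then obtain i j where "i \<in> A" "j \<in> A" "a/2 - r j + r i/2 = 0" by blast
    moreover from this(3) have "r k + r i = 2 * r j" unfolding a_def by (simp add: field_simps)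
    ultimately show "\<exists>i<n. \<exists>j<n. i \<noteq> k \<and> j \<noteq> k \<and> r k + r i = 2 * r j"
      unfolding A_def by blast
  next
    assume "\<exists>i<n. \<exists>j<n. i \<noteq> k \<and> j \<noteq> k \<and> r k + r i = 2 * r j"
    then obtain i j where ij: "i<n" "j<n" "i \<noteq> k" "j \<noteq> k" "r k + r i = 2 * r j" by blast
    then have "a/2 - r j + r i/2 = 0" unfolding a_def by (simp add: field_simps)
    then show "\<exists>y. (\<exists>i\<in>A. y = r i) \<and> (\<exists>j\<in>A. a/2 - r j + y/2 = 0)"
      using ij unfolding A_def by blast
  qed
  finally show ?thesis unfolding a_def .
qed



lemma D1_iff: "D1 n r = 0 \<longleftrightarrow> (\<exists>i j. i < j \<and> j < n \<and> r i = r j)"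
proof -
  have fin: "finite {(i,j). i < j \<and> j < (n::nat)}"
    by (rule finite_subset[of _ "{..<n} \<times> {..<n}"]) auto
  show ?thesis unfolding D1_def prod_zero_iff[OF fin] by auto
qed

lemma D2_iff: "D2 n r = 0 \<longleftrightarrow> (\<exists>i j k. i < j \<and> j < n \<and> k < n \<and> j \<noteq> k \<and> k \<noteq> i \<and> 2 * r k - r i - r j = 0)"
proof -
  have fin: "finite {(i,j,k). i < j \<and> j < n \<and> k < n \<and> j \<noteq> k \<and> k \<noteq> (i::nat)}"
    by (rule finite_subset[of _ "{..<n} \<times> {..<n} \<times> {..<n}"]) auto
  show ?thesis unfolding D2_def prod_zero_iff[OF fin] by auto
qed

lemma D_iff: "D1 n r * D2 n r = 0 \<longleftrightarrow> (\<exists>k<n. \<exists>i<n. \<exists>j<n. i \<noteq> k \<and> j \<noteq> k \<and> r k + r i = 2 * r j)"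
proof
  assume "D1 n r * D2 n r = 0"
  then consider "D1 n r = 0" | "D2 n r = 0" by auto
  then show "\<exists>k<n. \<exists>i<n. \<exists>j<n. i \<noteq> k \<and> j \<noteq> k \<and> r k + r i = 2 * r j"
  proof cases
    case 1
    then obtain i j where "i < j" "j < n" "r i = r j" unfolding D1_iff by blast
    then show ?thesis by (intro exI[of _ j] conjI exI[of _ i]) auto
  next
    case 2
    then obtain i j k where "i < j" "j < n" "k < n" "j \<noteq> k" "k \<noteq> i" "2 * r k - r i - r j = 0"
      unfolding D2_iff by blast
    moreover from this(6) have "r i + r j = 2 * r k" by (simp add: algebra_simps)
    ultimately show ?thesis by (intro exI[of _ i] conjI exI[of _ j] exI[of _ k]) auto
  qed
next
  assume "\<exists>k<n. \<exists>i<n. \<exists>j<n. i \<noteq> k \<and> j \<noteq> k \<and> r k + r i = 2 * r j"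
  then obtain k i j where kij: "k<n" "i<n" "j<n" "i \<noteq> k" "j \<noteq> k" "r k + r i = 2 * r j" by blast
  show "D1 n r * D2 n r = 0"
  proof (cases "i = j")
    case True
    then have e: "r k = r j" using kij(6) by simp
    have "D1 n r = 0"
    proof (cases "k < j")
      case True
      then show ?thesis unfolding D1_iff using kij e by blast
    next
      case False
      then have "j < k" using kij(5) by simp
      then show ?thesis unfolding D1_iff using kij e by (metis)
    qed
    then show ?thesis by simp
  next
    case False
    have e: "2 * r j - r k - r i = 0" using kij(6) by (simp add: algebra_simps)
    have e2: "2 * r j - r i - r k = 0" using kij(6) by (simp add: algebra_simps)
    have "D2 n r = 0"
    proof (cases "k < i")
      case True
      then show ?thesis unfolding D2_iff using kij False e by blast
    next
      case F2: False
      then have "i < k" using kij(4) by simp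
      then show ?thesis unfolding D2_iff using kij False e2 by blast
    qed
    then show ?thesis by simp
  qed
qed



theorem proposition4:
  fixes n :: nat and f :: "complex poly" and r :: "nat \<Rightarrow> complex"
  assumes "n \<ge> 3"
    and "f = (\<Prod>i<n. [:- r i, 1:])"
  shows "resultant f (resultant (f1 f) (f2 f)) = 0 \<longleftrightarrow> D1 n r * D2 n r = 0"
proof -
  note fd = assms(2)
  have f0: "f \<noteq> 0" unfolding fd by (simp add: prod_zero_iff)
  have "degree f = (\<Sum>i<n. degree [:- r i, 1::complex:])"
    unfolding fd by (rule degree_prod_eq_sum_degree) simp
  then have df: "degree f = n" by simp
  then have dfp: "degree f > 0" using assms(1) by simp
  have roots: "poly f x = 0 \<longleftrightarrow> (\<exists>k<n. x = r k)" for x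
    unfolding fd poly_prod by (subst prod_zero_iff) auto
  have "resultant f (resultant (f1 f) (f2 f)) = 0 \<longleftrightarrow>
     (\<exists>x. poly f x = 0 \<and> poly (resultant (f1 f) (f2 f)) x = 0)"
    by (rule res0_iff[OF f0])
  also have "\<dots> \<longleftrightarrow> (\<exists>k<n. poly (resultant (f1 f) (f2 f)) (r k) = 0)"
  proof
    assume "\<exists>x. poly f x = 0 \<and> poly (resultant (f1 f) (f2 f)) x = 0"
    then obtain x where x: "poly f x = 0" "poly (resultant (f1 f) (f2 f)) x = 0" by blast
    then obtain k where "k < n" "x = r k" using roots[of x] by blast
    then show "\<exists>k<n. poly (resultant (f1 f) (f2 f)) (r k) = 0" using x by blast
  next
    assume "\<exists>k<n. poly (resultant (f1 f) (f2 f)) (r k) = 0"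
    then obtain k where k: "k < n" "poly (resultant (f1 f) (f2 f)) (r k) = 0" by blast
    then have "poly f (r k) = 0" using roots[of "r k"] by blast
    then show "\<exists>x. poly f x = 0 \<and> poly (resultant (f1 f) (f2 f)) x = 0" using k by blast
  qed
  also have "\<dots> \<longleftrightarrow> (\<exists>k<n. \<exists>i<n. \<exists>j<n. i \<noteq> k \<and> j \<noteq> k \<and> r k + r i = 2 * r j)"
  proof -
    have step: "poly (resultant (f1 f) (f2 f)) (r k) = 0 \<longleftrightarrow> (\<exists>i<n. \<exists>j<n. i \<noteq> k \<and> j \<noteq> k \<and> r k + r i = 2 * r j)"
      if "k < n" for k
      by (simp only: res_eval[OF dfp] key[OF fd that])
    show ?thesis using step by auto
  qed
  also have "\<dots> \<longleftrightarrow> D1 n r * D2 n r = 0" by (rule D_iff[symmetric])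
  finally show ?thesis .
qed


end
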